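(* Let $w,x\in\mathfrak{S}_n$ be such that $x$ is represented by a run, i.e. $x=\sigma_p\sigma_{p+1}\cdots\sigma_{p+q}$ or $x=\sigma_p\sigma_{p-1}\cdots\sigma_{p-q}$ for some $p$ and $q\ge0$. Then $|\lambda_1(wx)-\lambda_1(w)|\le1$.
   Context: Permutations are composed right to left and $\sigma_i=(i,i+1)$. For $u\in\mathfrak{S}_n$, $\lambda_1(u)$ is the length of the first row of the shape of the tableaux associated to $u$ by the Robinson–Schensted correspondence; equivalently, the length of a longest increasing subsequence of the one-line notation of $u$. *)

theory Defs
  imports "HOL-Combinatorics.Permutations" "HOL-Combinatorics.Transposition"
begin

text \<open>Permutations of {1..n} are functions nat => nat with (permutes {1..n}).
  Composition is right to left: (w o x) i = w (x i).\<close>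

definition sigma :: "nat \<Rightarrow> nat \<Rightarrow> nat" where
  "sigma i = transpose i (i + 1)"

definition prod_perms :: "(nat \<Rightarrow> nat) list \<Rightarrow> nat \<Rightarrow> nat" where
  "prod_perms fs = foldr (\<circ>) fs id"

definition asc_run :: "nat \<Rightarrow> nat \<Rightarrow> nat \<Rightarrow> nat" where
  "asc_run p q = prod_perms (map (\<lambda>k. sigma (p + k)) [0..<q+1])"

text \<open>Descending run sigma_p sigma_(p-1) ... sigma_(p-q) (used with q < p).\<close>
definition desc_run :: "nat \<Rightarrow> nat \<Rightarrow> nat \<Rightarrow> nat" where
  "desc_run p q = prod_perms (map (\<lambda>k. sigma (p - k)) [0..<q+1])"

text \<open>Length of a longest increasing subsequence of the one-line notation
  u(1) u(2) ... u(n), i.e. lambda_1 of the RS shape.\<close>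
definition lis :: "nat \<Rightarrow> (nat \<Rightarrow> nat) \<Rightarrow> nat" where
  "lis n u = Max {card S | S. S \<subseteq> {1..n} \<and> strict_mono_on S u}"

end

theory Submission
  imports Defs
begin

lemma lis_set_finite: "finite {card S | S. S \<subseteq> {1..(n::nat)} \<and> strict_mono_on S u}"
proof -
  have "{card S | S. S \<subseteq> {1..n} \<and> strict_mono_on S u} \<subseteq> card ` Pow {1..n}" by blast
  thus ?thesis by (rule finite_subset) (intro finite_imageI finite_Pow_iff[THEN iffD2] finite_atLeastAtMost)
qed


lemma lis_ge: "S \<subseteq> {1..n} \<Longrightarrow> strict_mono_on S u \<Longrightarrow> card S \<le> lis n u"
  unfolding lis_def by (rule Max_ge[OF lis_set_finite]) blast

lemma lis_obtain: obtains S where "S \<subseteq> {1..n}" "strict_mono_on S u" "card S = lis n u"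
proof -
  have "strict_mono_on {} u" by (rule strict_mono_onI) simp
  hence "card {} \<in> {card S | S. S \<subseteq> {1..n} \<and> strict_mono_on S u}"
    by (intro CollectI exI[of _ "{}"]) simp
  hence ne: "{card S | S. S \<subseteq> {1..n} \<and> strict_mono_on S u} \<noteq> {}" by blast
  have "lis n u \<in> {card S | S. S \<subseteq> {1..n} \<and> strict_mono_on S u}"
    unfolding lis_def by (rule Max_in[OF lis_set_finite ne])
  then obtain S where "S \<subseteq> {1..n}" "strict_mono_on S u" "card S = lis n u" by auto
  thus ?thesis using that by simp
qed
lemma move_one:
  assumes a: "a \<in> {1..n}" and b: "b \<in> {1..n}"
    and sm: "strict_mono_on ({1..n}-{a}) x"
    and im: "x ` ({1..n}-{a}) \<subseteq> {1..n}-{b}"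
  shows "\<bar>int (lis n (w \<circ> x)) - int (lis n w)\<bar> \<le> 1"
proof -
  let ?A = "{1..n}-{a}" and ?B = "{1..n}-{b}"
  have inj: "inj_on x ?A" using sm by (rule strict_mono_on_imp_inj_on)
  have cA: "card ?A = card ?B" using a b by simp
  have cc: "card (x ` ?A) = card ?B" using card_image[OF inj] cA by simp
  have imeq: "x ` ?A = ?B"
    using card_subset_eq[OF _ im cc] by simp
  have d1: "lis n w \<le> lis n (w \<circ> x) + 1"
  proof -
    obtain S where S: "S \<subseteq> {1..n}" "strict_mono_on S w" "card S = lis n w" by (rule lis_obtain)
    define T where "T = {t \<in> ?A. x t \<in> S}"
    have TA: "T \<subseteq> ?A" unfolding T_def by auto
    have xT: "x ` T = S - {b}"
    proof
      show "x ` T \<subseteq> S - {b}" using imeq unfolding T_def by auto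
      show "S - {b} \<subseteq> x ` T"
      proof
        fix y assume y: "y \<in> S - {b}"
        then have "y \<in> x ` ?A" using imeq S(1) by auto
        then obtain t where "t \<in> ?A" "y = x t" by blast
        thus "y \<in> x ` T" using y unfolding T_def by auto
      qed
    qed
    have "card T = card (S - {b})"
      using card_image[OF inj_on_subset[OF inj TA]] xT by simp
    moreover have "card S \<le> card (S - {b}) + 1"
      using finite_subset[OF S(1)] by (cases "card S") (auto simp: card_Diff_singleton_if)
    moreover have "strict_mono_on T (w \<circ> x)"
    proof (rule strict_mono_onI)
      fix r s assume "r \<in> T" "s \<in> T" "r < s"
      then have "x r \<in> S" "x s \<in> S" "r \<in> ?A" "s \<in> ?A" unfolding T_def by auto
      moreover have "x r < x s" using strict_mono_onD[OF sm] calculation \<open>r < s\<close> by blast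
      ultimately have "x r < x s" "x r \<in> S" "x s \<in> S" by auto
      thus "(w \<circ> x) r < (w \<circ> x) s" using S(2) by (auto dest: strict_mono_onD)
    qed
    hence "card T \<le> lis n (w \<circ> x)" using TA by (intro lis_ge) auto
    ultimately show ?thesis using S(3) by linarith
  qed
  have d2: "lis n (w \<circ> x) \<le> lis n w + 1"
  proof -
    obtain T where T: "T \<subseteq> {1..n}" "strict_mono_on T (w \<circ> x)" "card T = lis n (w \<circ> x)"
      by (rule lis_obtain)
    define S where "S = x ` (T - {a})"
    have TA: "T - {a} \<subseteq> ?A" using T(1) by auto
    have "card S = card (T - {a})"
      unfolding S_def using card_image[OF inj_on_subset[OF inj TA]] by simp
    moreover have "card T \<le> card (T - {a}) + 1"
      using finite_subset[OF T(1)] by (cases "card T") (auto simp: card_Diff_singleton_if)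
    moreover have "S \<subseteq> {1..n}" unfolding S_def using im TA by auto
    moreover have "strict_mono_on S w"
    proof (rule strict_mono_onI)
      fix r s assume "r \<in> S" "s \<in> S" "r < s"
      then obtain r' s' where rs: "r' \<in> T - {a}" "s' \<in> T - {a}" "r = x r'" "s = x s'"
        unfolding S_def by auto
      have "r' < s'"
      proof (rule ccontr)
        assume "\<not> r' < s'"
        hence "s' < r' \<or> s' = r'" by auto
        moreover have "s' \<in> ?A" "r' \<in> ?A" using rs TA by auto
        ultimately show False using strict_mono_onD[OF sm, of s' r'] rs \<open>r < s\<close> by auto
      qed
      thus "w r < w s" using strict_mono_onD[OF T(2), of r' s'] rs by auto
    qed
    ultimately show ?thesis using T(3) lis_ge[of S n w] by linarith
  qed
  show ?thesis using d1 d2 by linarith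
qed

lemma prod_perms_snoc: "prod_perms (xs @ [f]) = prod_perms xs \<circ> f"
  by (induction xs) (auto simp: prod_perms_def)

lemma sigma_apply: "sigma j i = (if i = j then j + 1 else if i = j + 1 then j else i)"
  by (simp add: sigma_def transpose_def)

lemma asc_formula:
  "asc_run p q i = (if p \<le> i \<and> i \<le> p + q then i + 1 else if i = p + q + 1 then p else i)"
proof (induction q arbitrary: i)
  case 0
  then show ?case by (simp add: asc_run_def prod_perms_def sigma_apply)
next
  case (Suc q)
  have "asc_run p (Suc q) = asc_run p q \<circ> sigma (p + Suc q)"
  proof -
    have e: "[0..<Suc q + 1] = [0..<q+1] @ [q+1]" by simp
    show ?thesis unfolding asc_run_def e map_append list.map prod_perms_snoc by simp
  qed
  then have "asc_run p (Suc q) i = asc_run p q (sigma (p + Suc q) i)" by simp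
  then show ?case
    by (cases "i = p + Suc q"; cases "i = p + Suc q + 1") (simp_all add: Suc.IH sigma_apply)
qed

lemma desc_formula:
  "q \<le> p \<Longrightarrow> desc_run p q i = (if p - q < i \<and> i \<le> p + 1 then i - 1 else if i = p - q then p + 1 else i)"
proof (induction q arbitrary: i)
  case 0
  then show ?case by (simp add: desc_run_def prod_perms_def sigma_apply)
next
  case (Suc q)
  have "desc_run p (Suc q) = desc_run p q \<circ> sigma (p - Suc q)"
  proof -
    have e: "[0..<Suc q + 1] = [0..<q+1] @ [q+1]" by simp
    show ?thesis unfolding desc_run_def e map_append list.map prod_perms_snoc by simp
  qed
  then have "desc_run p (Suc q) i = desc_run p q (sigma (p - Suc q) i)" by simp
  moreover obtain m where pm: "p = Suc q + m" using Suc.prems by (metis le_iff_add)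
  moreover have IH: "desc_run p q j = (if Suc m < j \<and> j \<le> p + 1 then j - 1 else if j = Suc m then p + 1 else j)" for j
    using Suc.IH[of j] Suc.prems pm by simp
  ultimately show ?case
    by (cases "i = m"; cases "i = Suc m") (simp_all add: IH sigma_apply)
qed

lemma asc_mono: "r < s \<Longrightarrow> r \<noteq> p+q+1 \<Longrightarrow> s \<noteq> p+q+1 \<Longrightarrow> asc_run p q r < asc_run p q s"
  unfolding asc_formula by simp
lemma asc_img: "1 \<le> p \<Longrightarrow> p+q+1 \<le> n \<Longrightarrow> r \<in> {1..n} - {p+q+1} \<Longrightarrow> asc_run p q r \<in> {1..n} - {p}"
  unfolding asc_formula by simp arith
lemma desc_mono: "q < p \<Longrightarrow> r < s \<Longrightarrow> r \<noteq> p - q \<Longrightarrow> s \<noteq> p - q \<Longrightarrow> desc_run p q r < desc_run p q s"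
  by (simp add: desc_formula) arith
lemma desc_img: "q < p \<Longrightarrow> p+1 \<le> n \<Longrightarrow> r \<in> {1..n} - {p - q} \<Longrightarrow> desc_run p q r \<in> {1..n} - {p+1}"
  by (simp add: desc_formula) arith
theorem lemma6p2:
  fixes n p q :: nat and w x :: "nat \<Rightarrow> nat"
  assumes "w permutes {1..n}"
    and "(1 \<le> p \<and> p + q + 1 \<le> n \<and> x = asc_run p q)
         \<or> (q < p \<and> p + 1 \<le> n \<and> x = desc_run p q)"
  shows "\<bar>int (lis n (w \<circ> x)) - int (lis n w)\<bar> \<le> 1"
  using assms(2)
proof
  assume h: "1 \<le> p \<and> p + q + 1 \<le> n \<and> x = asc_run p q"
  have a: "p + q + 1 \<in> {1..n}" "p \<in> {1..n}" using h by auto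
  have sm: "strict_mono_on ({1..n} - {p + q + 1}) x"
  proof (rule strict_mono_onI)
    fix r s assume "r \<in> {1..n} - {p + q + 1}" "s \<in> {1..n} - {p + q + 1}" "r < s"
    then show "x r < x s" using h asc_mono[of r s p q] by simp
  qed
  have im: "x ` ({1..n} - {p + q + 1}) \<subseteq> {1..n} - {p}"
  proof
    fix y assume "y \<in> x ` ({1..n} - {p + q + 1})"
    then obtain r where "r \<in> {1..n} - {p + q + 1}" "y = x r" by blast
    then show "y \<in> {1..n} - {p}" using h asc_img[of p q n r] by simp
  qed
  show ?thesis by (rule move_one[OF a sm im])
next
  assume h: "q < p \<and> p + 1 \<le> n \<and> x = desc_run p q"
  have a: "p - q \<in> {1..n}" "p + 1 \<in> {1..n}" using h by auto
  have sm: "strict_mono_on ({1..n} - {p - q}) x"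
  proof (rule strict_mono_onI)
    fix r s assume "r \<in> {1..n} - {p - q}" "s \<in> {1..n} - {p - q}" "r < s"
    then show "x r < x s" using h desc_mono[of q p r s] by simp
  qed
  have im: "x ` ({1..n} - {p - q}) \<subseteq> {1..n} - {p + 1}"
  proof
    fix y assume "y \<in> x ` ({1..n} - {p - q})"
    then obtain r where "r \<in> {1..n} - {p - q}" "y = x r" by blast
    then show "y \<in> {1..n} - {p + 1}" using h desc_img[of q p n r] by simp
  qed
  show ?thesis by (rule move_one[OF a sm im])
qed

end
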